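(* Let a linear first order system with no zero order equations be involutive and written, in $\delta$-regular coordinates $(x^1,\dots,x^n)$, in solved form with respect to its principal first order jets (expressed in terms of parametric jets). Then for each $i=1,\dots,n$, the subsystem consisting of all equations of class $1,\dots,i$ contains only the derivations $d_1,\dots,d_i$ and is still involutive, when the independent variables are ordered as $x^{i+1},\dots,x^n,x^1,\dots,x^i$.
   Context: $K$ is a differential field with commuting derivations; unknowns $y^1,\dots,y^m$, $y^k_j=d_jy^k$. Classes and multiplicative variables: solve the maximal number of equations with respect to jets of class $n$ (jets $y^k_n$), then the maximal number of remaining ones with respect to jets of class $n-1$, etc.; an equation of class $i$ contains no jet $y^k_j$ with $j>i$ and has multiplicative variables $x^1,\dots,x^i$, the others being non-multiplicative. The system is involutive if it is formally integrable and its first prolongation is obtained by prolonging each equation only with respect to its multiplicative variables. "No zero order equations" means the system projects onto the full space of zero order jets. *)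

theory Defs
  imports Main
begin

text \<open>Independent variables x^1..x^n are indexed by 1..n, unknowns y^1..y^m by 1..m.
A jet y^k_mu is a pair (k, mu) with mu a multi-index supported in {1..n}.
An (affine) linear differential form over K is a coefficient function on jets;
the entry at None is the constant term.  The equation is "form = 0".\<close>

type_synonym jet = "nat \<times> (nat \<Rightarrow> nat)"
type_synonym 'a lform = "jet option \<Rightarrow> 'a"

definition diff_field :: "nat \<Rightarrow> (nat \<Rightarrow> 'a::field \<Rightarrow> 'a) \<Rightarrow> bool" where
  "diff_field n D \<longleftrightarrow>
     (\<forall>i\<in>{1..n}. \<forall>a b. D i (a + b) = D i a + D i b \<and> D i (a * b) = D i a * b + a * D i b)
   \<and> (\<forall>i\<in>{1..n}. \<forall>j\<in>{1..n}. \<forall>a. D i (D j a) = D j (D i a))"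

definition unitv :: "nat \<Rightarrow> nat \<Rightarrow> nat" where
  "unitv j = (\<lambda>l. if l = j then 1 else 0)"

definition wf_form :: "nat \<Rightarrow> nat \<Rightarrow> 'a::zero lform \<Rightarrow> bool" where
  "wf_form n m e \<longleftrightarrow> finite {x. e x \<noteq> 0} \<and>
     (\<forall>k \<mu>. e (Some (k, \<mu>)) \<noteq> 0 \<longrightarrow> k \<in> {1..m} \<and> (\<forall>l. l \<notin> {1..n} \<longrightarrow> \<mu> l = 0))"

definition ford :: "nat \<Rightarrow> 'a::zero lform \<Rightarrow> nat" where
  "ford n e = Max (insert 0 {sum \<mu> {1..n} | k \<mu>. e (Some (k, \<mu>)) \<noteq> 0})"

text \<open>Formal derivative d_i of a form (d_i y^k_mu = y^k_{mu+1_i}).\<close>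
definition ldiff :: "(nat \<Rightarrow> 'a::field \<Rightarrow> 'a) \<Rightarrow> nat \<Rightarrow> 'a lform \<Rightarrow> 'a lform" where
  "ldiff D i e = (\<lambda>x. case x of
      None \<Rightarrow> D i (e None)
    | Some (k, \<mu>) \<Rightarrow> D i (e (Some (k, \<mu>))) + (if 0 < \<mu> i then e (Some (k, \<mu>(i := \<mu> i - 1))) else 0))"

definition lspan :: "'a::field lform set \<Rightarrow> 'a lform set" where
  "lspan E = {f. \<exists>F c. finite F \<and> F \<subseteq> E \<and> f = (\<lambda>x. \<Sum>e\<in>F. c e * e x)}"

primrec prol :: "(nat \<Rightarrow> 'a::field \<Rightarrow> 'a) \<Rightarrow> nat \<Rightarrow> 'a lform set \<Rightarrow> nat \<Rightarrow> 'a lform set" where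
  "prol D n E 0 = E"
| "prol D n E (Suc r) = prol D n E r \<union> {ldiff D i e | i e. i \<in> {1..n} \<and> e \<in> prol D n E r}"

text \<open>Formal integrability of a system of order q: no prolongation produces new
equations of lower order (projection of R_{q+r+1} onto R_{q+r} is onto).\<close>
definition formally_integrable :: "(nat \<Rightarrow> 'a::field \<Rightarrow> 'a) \<Rightarrow> nat \<Rightarrow> nat \<Rightarrow> 'a lform set \<Rightarrow> bool" where
  "formally_integrable D n q E \<longleftrightarrow>
     (\<forall>r. {P \<in> lspan (prol D n E (Suc r)). ford n P \<le> q + r} \<subseteq> lspan (prol D n E r))"

definition linear_first_order_system :: "nat \<Rightarrow> nat \<Rightarrow> 'a::field lform set \<Rightarrow> bool" where
  "linear_first_order_system n m E \<longleftrightarrow> finite E \<and> (\<forall>e\<in>E. wf_form n m e \<and> ford n e \<le> 1)"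

text \<open>No zero order equations: no nonzero equation of order 0 (incl. constants) in the span.\<close>
definition no_zero_order :: "nat \<Rightarrow> 'a::field lform set \<Rightarrow> bool" where
  "no_zero_order n E \<longleftrightarrow> (\<forall>P\<in>lspan E. ford n P = 0 \<longrightarrow> P = (\<lambda>_. 0))"

text \<open>Class of an equation w.r.t. an ordering of the independent variables:
pos j is the position of x^j; the class of the jet y^k_j is pos j.\<close>
definition cls :: "nat \<Rightarrow> (nat \<Rightarrow> nat) \<Rightarrow> 'a::zero lform \<Rightarrow> nat" where
  "cls n pos e = Max (insert 0 {pos j | j k. j \<in> {1..n} \<and> e (Some (k, unitv j)) \<noteq> 0})"

text \<open>Solved form w.r.t. principal first order jets: each equation has a principal
jet y^k_j of its (maximal) class with coefficient 1, and principal jets of an equation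
do not occur in any other equation (everything else is parametric).\<close>
definition solved_form :: "nat \<Rightarrow> (nat \<Rightarrow> nat) \<Rightarrow> 'a::field lform set \<Rightarrow> bool" where
  "solved_form n pos E \<longleftrightarrow> (\<exists>pj :: 'a lform \<Rightarrow> nat \<times> nat.
     (\<forall>e\<in>E. snd (pj e) \<in> {1..n} \<and> e (Some (fst (pj e), unitv (snd (pj e)))) = 1
            \<and> pos (snd (pj e)) = cls n pos e)
   \<and> (\<forall>e\<in>E. \<forall>e'\<in>E. e' \<noteq> e \<longrightarrow> e' (Some (fst (pj e), unitv (snd (pj e)))) = 0))"

text \<open>Equations together with their prolongations w.r.t. multiplicative variables
(x^j is multiplicative for e iff pos j <= class of e).\<close>
definition mult_prol :: "(nat \<Rightarrow> 'a::field \<Rightarrow> 'a) \<Rightarrow> nat \<Rightarrow> (nat \<Rightarrow> nat) \<Rightarrow> 'a lform set \<Rightarrow> 'a lform set" where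
  "mult_prol D n pos E = E \<union> {ldiff D j e | j e. e \<in> E \<and> j \<in> {1..n} \<and> pos j \<le> cls n pos e}"

definition involutive :: "(nat \<Rightarrow> 'a::field \<Rightarrow> 'a) \<Rightarrow> nat \<Rightarrow> nat \<Rightarrow> (nat \<Rightarrow> nat) \<Rightarrow> 'a lform set \<Rightarrow> bool" where
  "involutive D n q pos E \<longleftrightarrow> solved_form n pos E \<and> formally_integrable D n q E
     \<and> lspan (prol D n E 1) = lspan (mult_prol D n pos E)"

text \<open>Symbol of a first order equation after the linear change of
independent variables with constant invertible matrix B (d_j = sum_l B j l d'_l).
Rank of the rows restricted to the columns of class >= l (jets y^k_{l'} with l' >= l).
Coordinates are delta-regular iff sum_l rank_{>= l} = sum_i i * beta^i is maximal.\<close>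
definition tsym :: "nat \<Rightarrow> (nat \<Rightarrow> nat \<Rightarrow> 'a::field) \<Rightarrow> 'a lform \<Rightarrow> nat \<times> nat \<Rightarrow> 'a" where
  "tsym n B e = (\<lambda>(k, l). \<Sum>j\<in>{1..n}. e (Some (k, unitv j)) * B j l)"

definition rows_indep :: "nat \<Rightarrow> nat \<Rightarrow> ('a lform \<Rightarrow> nat \<times> nat \<Rightarrow> 'a::field) \<Rightarrow> nat \<Rightarrow> 'a lform set \<Rightarrow> bool" where
  "rows_indep n m A l S \<longleftrightarrow> (\<forall>c. (\<forall>k\<in>{1..m}. \<forall>j\<in>{l..n}. (\<Sum>e\<in>S. c e * A e (k, j)) = 0)
       \<longrightarrow> (\<forall>e\<in>S. c e = 0))"

definition sym_rank :: "nat \<Rightarrow> nat \<Rightarrow> ('a lform \<Rightarrow> nat \<times> nat \<Rightarrow> 'a::field) \<Rightarrow> 'a lform set \<Rightarrow> nat \<Rightarrow> nat" where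
  "sym_rank n m A E l = Max {card S | S. S \<subseteq> E \<and> rows_indep n m A l S}"

definition idmat :: "nat \<Rightarrow> nat \<Rightarrow> 'a::field" where
  "idmat j l = (if j = l then 1 else 0)"

definition const_invertible :: "(nat \<Rightarrow> 'a::field \<Rightarrow> 'a) \<Rightarrow> nat \<Rightarrow> (nat \<Rightarrow> nat \<Rightarrow> 'a) \<Rightarrow> bool" where
  "const_invertible D n B \<longleftrightarrow>
     (\<forall>i\<in>{1..n}. \<forall>j\<in>{1..n}. \<forall>l\<in>{1..n}. D i (B j l) = 0)
   \<and> (\<exists>C. \<forall>j\<in>{1..n}. \<forall>l\<in>{1..n}. (\<Sum>p\<in>{1..n}. B j p * C p l) = idmat j l
                                  \<and> (\<Sum>p\<in>{1..n}. C j p * B p l) = idmat j l)"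

definition delta_regular :: "(nat \<Rightarrow> 'a::field \<Rightarrow> 'a) \<Rightarrow> nat \<Rightarrow> nat \<Rightarrow> 'a lform set \<Rightarrow> bool" where
  "delta_regular D n m E \<longleftrightarrow> (\<forall>B. const_invertible D n B \<longrightarrow>
     (\<Sum>l\<in>{1..n}. sym_rank n m (tsym n B) E l) \<le> (\<Sum>l\<in>{1..n}. sym_rank n m (tsym n idmat) E l))"

definition shift_order :: "nat \<Rightarrow> nat \<Rightarrow> nat \<Rightarrow> nat" where
  "shift_order n i j = (if j \<le> i then j + (n - i) else j - i)"

end

theory Submission
  imports Defs
begin

section \<open>Basic facts on D\<close>

lemma df_add: "diff_field n D \<Longrightarrow> i \<in> {1..n} \<Longrightarrow> D i (a + b) = D i a + D i b"
  unfolding diff_field_def by blast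

lemma df_zero: "diff_field n D \<Longrightarrow> i \<in> {1..n} \<Longrightarrow> D i 0 = 0"
proof -
  assume a: "diff_field n D" "i \<in> {1..n}"
  have "D i 0 + D i 0 = D i 0 + 0" using df_add[OF a, of 0 0] by simp
  then show "D i 0 = 0" by (rule add_left_imp_eq)
qed

lemma df_mult: "diff_field n D \<Longrightarrow> i \<in> {1..n} \<Longrightarrow> D i (a * b) = D i a * b + a * D i b"
  unfolding diff_field_def by blast

lemma df_comm: "diff_field n D \<Longrightarrow> i \<in> {1..n} \<Longrightarrow> j \<in> {1..n} \<Longrightarrow> D i (D j a) = D j (D i a)"
  unfolding diff_field_def by blast

lemma df_sum: "diff_field n D \<Longrightarrow> i \<in> {1..n} \<Longrightarrow> D i (\<Sum>x\<in>A. f x) = (\<Sum>x\<in>A. D i (f x))"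
proof (induction A rule: infinite_finite_induct)
  case (infinite A) then show ?case by (simp add: df_zero)
next
  case empty then show ?case by (simp add: df_zero)
next
  case (insert x F) then show ?case by (simp add: df_add)
qed

lemma ldiff_None[simp]: "ldiff D i e None = D i (e None)"
  by (simp add: ldiff_def)

lemma ldiff_Some[simp]: "ldiff D i e (Some (k, \<mu>)) =
   D i (e (Some (k, \<mu>))) + (if 0 < \<mu> i then e (Some (k, \<mu>(i := \<mu> i - 1))) else 0)"
  by (simp add: ldiff_def)

lemma ldiff_comm:
  assumes "diff_field n D" "i \<in> {1..n}" "j \<in> {1..n}"
  shows "ldiff D i (ldiff D j e) = ldiff D j (ldiff D i e)"
proof (rule ext)
  fix x show "ldiff D i (ldiff D j e) x = ldiff D j (ldiff D i e) x"
  proof (cases x)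
    case None then show ?thesis using df_comm[OF assms] by simp
  next
    case (Some a)
    then obtain k \<mu> where x: "x = Some (k, \<mu>)" by (cases a) auto
    show ?thesis
    proof (cases "i = j")
      case True then show ?thesis by simp
    next
      case False
      have c: "D i (D j a) = D j (D i a)" for a using df_comm[OF assms] .
      have u: "\<mu>(i := \<mu> i - 1, j := \<mu> j - 1) = \<mu>(j := \<mu> j - 1, i := \<mu> i - 1)"
        using False by (simp add: fun_upd_twist)
      show ?thesis unfolding x
        using False df_add[OF assms(1) assms(2)] df_add[OF assms(1) assms(3)]
          df_zero[OF assms(1) assms(2)] df_zero[OF assms(1) assms(3)]
        by (cases "0 < \<mu> i"; cases "0 < \<mu> j"; simp add: c fun_upd_twist[OF False] add_ac)
    qed
  qed
qed

section \<open>Linear spans\<close>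

lemma lspan_mem: "e \<in> E \<Longrightarrow> e \<in> lspan E"
  unfolding lspan_def by (rule CollectI, rule exI[of _ "{e}"], rule exI[of _ "\<lambda>_. 1"]) auto

lemma lspan_zero: "(\<lambda>_. 0) \<in> lspan E"
  unfolding lspan_def by (rule CollectI, rule exI[of _ "{}"]) auto

lemma lspan_add:
  assumes "a \<in> lspan E" "b \<in> lspan E"
  shows "(\<lambda>x. a x + b x) \<in> lspan E"
proof -
  obtain F1 c1 where 1: "finite F1" "F1 \<subseteq> E" "a = (\<lambda>x. \<Sum>e\<in>F1. c1 e * e x)"
    using assms(1) unfolding lspan_def by blast
  obtain F2 c2 where 2: "finite F2" "F2 \<subseteq> E" "b = (\<lambda>x. \<Sum>e\<in>F2. c2 e * e x)"
    using assms(2) unfolding lspan_def by blast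
  define c where "c e = (if e \<in> F1 then c1 e else 0) + (if e \<in> F2 then c2 e else 0)" for e
  have "(\<lambda>x. a x + b x) = (\<lambda>x. \<Sum>e\<in>F1 \<union> F2. c e * e x)"
  proof (rule ext)
    fix x
    have "(\<Sum>e\<in>F1 \<union> F2. c e * e x) = (\<Sum>e\<in>F1 \<union> F2. (if e \<in> F1 then c1 e * e x else 0))
         + (\<Sum>e\<in>F1 \<union> F2. (if e \<in> F2 then c2 e * e x else 0))"
    proof -
      have "\<And>e. c e * e x = (if e \<in> F1 then c1 e * e x else 0) + (if e \<in> F2 then c2 e * e x else 0)"
        unfolding c_def by (simp add: distrib_right)
      then show ?thesis by (simp add: sum.distrib)
    qed
    also have "\<dots> = (\<Sum>e\<in>F1. c1 e * e x) + (\<Sum>e\<in>F2. c2 e * e x)"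
      using 1 2 sum.inter_restrict[of "F1 \<union> F2" "\<lambda>e. c1 e * e x" F1]
         sum.inter_restrict[of "F1 \<union> F2" "\<lambda>e. c2 e * e x" F2]
      by (simp add: Int_absorb1 Int_absorb2)
    finally show "a x + b x = (\<Sum>e\<in>F1 \<union> F2. c e * e x)" using 1 2 by simp
  qed
  then show ?thesis unfolding lspan_def using 1 2 by blast
qed

lemma lspan_smult:
  assumes "a \<in> lspan E"
  shows "(\<lambda>x. k * a x) \<in> lspan E"
proof -
  obtain F c where 1: "finite F" "F \<subseteq> E" "a = (\<lambda>x. \<Sum>e\<in>F. c e * e x)"
    using assms(1) unfolding lspan_def by blast
  have "(\<lambda>x. k * a x) = (\<lambda>x. \<Sum>e\<in>F. (k * c e) * e x)"
    using 1 by (simp add: sum_distrib_left mult.assoc)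
  then show ?thesis unfolding lspan_def using 1 by (intro CollectI exI[of _ F] exI[of _ "\<lambda>e. k * c e"]) simp
qed

lemma lspan_sum:
  assumes "finite G" "\<forall>g\<in>G. v g \<in> lspan E"
  shows "(\<lambda>x. \<Sum>g\<in>G. w g * v g x) \<in> lspan E"
  using assms
proof (induction G rule: finite_induct)
  case empty then show ?case using lspan_zero by simp
next
  case (insert g F)
  have "v g \<in> lspan E" "\<forall>g\<in>F. v g \<in> lspan E" using insert.prems by auto
  then have "(\<lambda>x. w g * v g x + (\<Sum>g\<in>F. w g * v g x)) \<in> lspan E"
    using lspan_add[OF lspan_smult[of "v g" E "w g"] insert.IH] by simp
  then show ?case using insert.hyps by simp
qed

lemma lspan_mono: "E \<subseteq> E' \<Longrightarrow> lspan E \<subseteq> lspan E'"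
proof
  fix P assume "E \<subseteq> E'" "P \<in> lspan E"
  then obtain F c where "finite F" "F \<subseteq> E" "P = (\<lambda>x. \<Sum>e\<in>F. c e * e x)"
    unfolding lspan_def by auto
  then show "P \<in> lspan E'" unfolding lspan_def using \<open>E \<subseteq> E'\<close> by auto
qed

lemma lspan_subset: "E \<subseteq> lspan G \<Longrightarrow> lspan E \<subseteq> lspan G"
proof
  fix P assume "E \<subseteq> lspan G" "P \<in> lspan E"
  then obtain F c where 1: "finite F" "F \<subseteq> E" "P = (\<lambda>x. \<Sum>e\<in>F. c e * e x)"
    unfolding lspan_def by blast
  have "\<forall>g\<in>F. g \<in> lspan G" using 1 \<open>E \<subseteq> lspan G\<close> by auto
  then show "P \<in> lspan G" unfolding 1(3) using lspan_sum[OF 1(1), of "\<lambda>e. e" G c] by simp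
qed

lemma lspan_nz:
  assumes "finite F" "P = (\<lambda>x. \<Sum>e\<in>F. c e * e x)" "\<forall>e\<in>F. c e \<noteq> 0 \<longrightarrow> e \<in> G"
  shows "P \<in> lspan G"
proof -
  let ?F = "{e\<in>F. c e \<noteq> 0}"
  have "P = (\<lambda>x. \<Sum>e\<in>?F. c e * e x)"
    unfolding assms(2) by (rule ext, rule sum.mono_neutral_right) (use assms in auto)
  moreover have "finite ?F" "?F \<subseteq> G" using assms by auto
  ultimately show ?thesis unfolding lspan_def by blast
qed

lemma ldiff_comb:
  assumes "diff_field n D" "t \<in> {1..n}"
  shows "ldiff D t (\<lambda>x. \<Sum>e\<in>F. c e * e x) = (\<lambda>x. (\<Sum>e\<in>F. D t (c e) * e x) + (\<Sum>e\<in>F. c e * ldiff D t e x))"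
proof (rule ext)
  fix x show "ldiff D t (\<lambda>x. \<Sum>e\<in>F. c e * e x) x = (\<Sum>e\<in>F. D t (c e) * e x) + (\<Sum>e\<in>F. c e * ldiff D t e x)"
  proof (cases x)
    case None then show ?thesis
      using assms by (simp add: df_sum df_mult sum.distrib distrib_left)
  next
    case (Some a)
    then obtain k \<mu> where x: "x = Some (k, \<mu>)" by (cases a) auto
    show ?thesis unfolding x
      using assms by (simp add: df_sum df_mult sum.distrib distrib_left sum_distrib_left)
  qed
qed

lemma ldiff_lspan:
  assumes "diff_field n D" "t \<in> {1..n}" "P \<in> lspan E" "E \<subseteq> lspan G"
    "\<forall>e\<in>E. ldiff D t e \<in> lspan G"
  shows "ldiff D t P \<in> lspan G"
proof -
  obtain F c where 1: "finite F" "F \<subseteq> E" "P = (\<lambda>x. \<Sum>e\<in>F. c e * e x)"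
    using assms(3) unfolding lspan_def by blast
  have "\<forall>g\<in>F. g \<in> lspan G" using 1 assms by auto
  then have a: "(\<lambda>x. \<Sum>e\<in>F. D t (c e) * e x) \<in> lspan G"
    using lspan_sum[OF 1(1), of "\<lambda>e. e" G "\<lambda>e. D t (c e)"] by simp
  have "\<forall>g\<in>F. ldiff D t g \<in> lspan G" using 1 assms by auto
  then have b: "(\<lambda>x. \<Sum>e\<in>F. c e * ldiff D t e x) \<in> lspan G"
    using lspan_sum[OF 1(1), of "\<lambda>e. ldiff D t e" G c] by simp
  show ?thesis unfolding 1(3) ldiff_comb[OF assms(1,2)] using lspan_add[OF a b] .
qed

definition fsupp :: "'a::zero lform \<Rightarrow> bool" where "fsupp e \<longleftrightarrow> finite {x. e x \<noteq> 0}"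
definition deg :: "nat \<Rightarrow> (nat \<Rightarrow> nat) \<Rightarrow> nat" where "deg n \<mu> = sum \<mu> {1..n}"
definition dl :: "(nat \<Rightarrow> 'a::field \<Rightarrow> 'a) \<Rightarrow> nat list \<Rightarrow> 'a lform \<Rightarrow> 'a lform" where
  "dl D js e = foldr (ldiff D) js e"
definition ms :: "nat list \<Rightarrow> nat \<Rightarrow> nat" where "ms js = (\<lambda>l. count_list js l)"
definition mplus :: "(nat \<Rightarrow> nat) \<Rightarrow> (nat \<Rightarrow> nat) \<Rightarrow> nat \<Rightarrow> nat" where "mplus \<mu> \<nu> = (\<lambda>l. \<mu> l + \<nu> l)"
definition key :: "nat \<Rightarrow> (nat \<Rightarrow> nat) \<Rightarrow> (nat \<Rightarrow> nat) \<Rightarrow> nat" where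
  "key n pos \<mu> = (\<Sum>q\<in>{1..n}. \<mu> q * 2 ^ pos q)"

lemma dl_Nil[simp]: "dl D [] e = e" by (simp add: dl_def)
lemma dl_Cons[simp]: "dl D (t # js) e = ldiff D t (dl D js e)" by (simp add: dl_def)

lemma fsupp_ldiff:
  assumes "diff_field n D" "t \<in> {1..n}" "fsupp e"
  shows "fsupp (ldiff D t e)"
proof -
  let ?S = "{x. e x \<noteq> 0}"
  let ?f = "map_option (\<lambda>(k::nat, \<mu>::nat\<Rightarrow>nat). (k, \<mu>(t := \<mu> t + 1)))"
  have "{x. ldiff D t e x \<noteq> 0} \<subseteq> insert None (?S \<union> ?f ` ?S)"
  proof
    fix x assume x: "x \<in> {x. ldiff D t e x \<noteq> 0}"
    show "x \<in> insert None (?S \<union> ?f ` ?S)"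
    proof (cases x)
      case (Some a)
      then obtain k \<mu> where xs: "x = Some (k, \<mu>)" by (cases a) auto
      show ?thesis
      proof (cases "e (Some (k, \<mu>)) = 0")
        case False then show ?thesis using xs by auto
      next
        case True
        then have "0 < \<mu> t \<and> e (Some (k, \<mu>(t := \<mu> t - 1))) \<noteq> 0"
          using x xs df_zero[OF assms(1,2)] by (auto split: if_splits)
        moreover then have "x = ?f (Some (k, \<mu>(t := \<mu> t - 1)))" using xs by auto
        ultimately show ?thesis by blast
      qed
    qed simp
  qed
  moreover have "finite (insert None (?S \<union> ?f ` ?S))" using assms(3) unfolding fsupp_def by simp
  ultimately show ?thesis unfolding fsupp_def by (rule finite_subset)
qed

lemma fsupp_comb:
  fixes c :: "'a::field lform \<Rightarrow> 'a"
  assumes "finite F" "\<forall>e\<in>F. fsupp e"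
  shows "fsupp (\<lambda>x. \<Sum>e\<in>F. c e * e x)"
proof -
  have "{x. (\<Sum>e\<in>F. c e * e x) \<noteq> 0} \<subseteq> (\<Union>e\<in>F. {x. e x \<noteq> 0})"
  proof
    fix x assume "x \<in> {x. (\<Sum>e\<in>F. c e * e x) \<noteq> 0}"
    then have "(\<Sum>e\<in>F. c e * e x) \<noteq> 0" by simp
    then obtain e where "e \<in> F" "c e * e x \<noteq> 0" by (meson sum.neutral)
    then have "e x \<noteq> 0" by auto
    then show "x \<in> (\<Union>e\<in>F. {x. e x \<noteq> 0})" using \<open>e \<in> F\<close> by auto
  qed
  moreover have "finite (\<Union>e\<in>F. {x. e x \<noteq> 0})" using assms unfolding fsupp_def by auto
  ultimately show ?thesis unfolding fsupp_def by (rule finite_subset)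
qed

lemma fsupp_lspan: "\<forall>e\<in>E. fsupp e \<Longrightarrow> P \<in> lspan E \<Longrightarrow> fsupp P"
proof -
  assume a: "\<forall>e\<in>E. fsupp e" "P \<in> lspan E"
  then obtain F c where 1: "finite F" "F \<subseteq> E" "P = (\<lambda>x. \<Sum>e\<in>F. c e * e x)"
    unfolding lspan_def by auto
  have "\<forall>e\<in>F. fsupp e" using 1 a by auto
  then show "fsupp P" using fsupp_comb[OF 1(1)] 1(3) by simp
qed

lemma ford_ge:
  assumes "fsupp P" "P (Some (k, \<mu>)) \<noteq> 0"
  shows "deg n \<mu> \<le> ford n P"
proof -
  let ?S = "{sum \<mu> {1..n} | k \<mu>. P (Some (k, \<mu>)) \<noteq> 0}"
  let ?g = "\<lambda>x. case x of None \<Rightarrow> 0 | Some (k::nat, \<mu>) \<Rightarrow> sum \<mu> {1..n}"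
  have "?S \<subseteq> ?g ` {x. P x \<noteq> 0}"
  proof
    fix v assume "v \<in> ?S"
    then obtain k \<mu> where "v = sum \<mu> {1..n}" "P (Some (k, \<mu>)) \<noteq> 0" by blast
    then show "v \<in> ?g ` {x. P x \<noteq> 0}" by (intro image_eqI[of _ _ "Some (k, \<mu>)"]) auto
  qed
  then have "finite ?S" using assms(1) unfolding fsupp_def by (meson finite_imageI finite_subset)
  moreover have "sum \<mu> {1..n} \<in> ?S" using assms(2) by blast
  ultimately show ?thesis unfolding ford_def deg_def by (simp add: Max_ge)
qed

lemma wf_fsupp: "wf_form n m e \<Longrightarrow> fsupp e"
  by (simp add: wf_form_def fsupp_def)

lemma fsupp_dl:
  assumes "diff_field n D" "set js \<subseteq> {1..n}" "fsupp e"
  shows "fsupp (dl D js e)"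
  using assms(2) by (induction js) (auto intro: fsupp_ldiff[OF assms(1)] simp: assms(3))

lemma dl_comm_mid:
  assumes "diff_field n D" "set ys1 \<subseteq> {1..n}" "a \<in> {1..n}"
  shows "dl D (ys1 @ a # ys2) g = ldiff D a (dl D (ys1 @ ys2) g)"
  using assms(2)
proof (induction ys1)
  case Nil then show ?case by simp
next
  case (Cons b ys1)
  then show ?case using ldiff_comm[OF assms(1), of b a] assms(3) by simp
qed

lemma ms_Nil[simp]: "ms [] = (\<lambda>l. 0)" by (simp add: ms_def)
lemma ms_Cons: "ms (t # js) = (\<lambda>l. if t = l then ms js l + 1 else ms js l)" by (simp add: ms_def fun_eq_iff)

lemma dl_ms:
  assumes "diff_field n D" "ms xs = ms ys" "set xs \<subseteq> {1..n}"
  shows "dl D xs g = dl D ys g"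
  using assms(2,3)
proof (induction xs arbitrary: ys)
  case Nil
  have c: "count_list ys y = 0" for y using fun_cong[OF Nil.prems(1), of y] by (simp add: ms_def)
  have "ys = []"
  proof (cases ys)
    case (Cons a r)
    then have "count_list ys a \<noteq> 0" by simp
    then show ?thesis using c[of a] by simp
  qed
  then show ?case by simp
next
  case (Cons a xs)
  have cc: "count_list ys x = count_list (a # xs) x" for x
    using fun_cong[OF Cons.prems(1), of x] by (simp add: ms_def)
  have sets: "set ys = set (a # xs)"
  proof (rule set_eqI)
    fix x
    show "x \<in> set ys \<longleftrightarrow> x \<in> set (a # xs)"
      using count_list_0_iff[of ys x] count_list_0_iff[of "a # xs" x] cc[of x] by argo
  qed
  then have "a \<in> set ys" by simp
  then obtain ys1 ys2 where ys: "ys = ys1 @ a # ys2" by (meson split_list)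
  have "ms xs = ms (ys1 @ ys2)"
  proof
    fix l
    show "ms xs l = ms (ys1 @ ys2) l" using cc[of l] unfolding ys ms_def by (auto split: if_splits)
  qed
  then have "dl D xs g = dl D (ys1 @ ys2) g" using Cons by simp
  moreover have "set ys1 \<subseteq> {1..n}" using sets ys Cons.prems(2) by auto
  ultimately show ?case using dl_comm_mid[OF assms(1)] ys Cons.prems(2) by simp
qed

lemma deg_ms: "set js \<subseteq> {1..n} \<Longrightarrow> deg n (ms js) = length js"
  unfolding deg_def ms_def using sum_count_set[of js "{1..n}"] by simp

lemma deg_unitv: "b \<in> {1..n} \<Longrightarrow> deg n (unitv b) = 1"
  unfolding deg_def unitv_def by simp

lemma deg_mplus: "deg n (mplus \<mu> \<nu>) = deg n \<mu> + deg n \<nu>"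
  unfolding deg_def mplus_def by (simp add: sum.distrib)

lemma deg_minus: "\<nu> \<le> \<mu> \<Longrightarrow> deg n (\<mu> - \<nu>) = deg n \<mu> - deg n \<nu>"
  unfolding deg_def by (simp add: sum_subtractf_nat le_fun_def)

lemma deg_dec:
  assumes "t \<in> {1..n}" "0 < \<mu> t"
  shows "deg n (\<mu>(t := \<mu> t - 1)) = deg n \<mu> - 1" "1 \<le> deg n \<mu>"
proof -
  have f: "finite {1..n}" by simp
  have a: "deg n \<mu> = \<mu> t + sum \<mu> ({1..n} - {t})"
    unfolding deg_def using sum.remove[OF f assms(1)] by simp
  have b: "deg n (\<mu>(t := \<mu> t - 1)) = (\<mu> t - 1) + sum \<mu> ({1..n} - {t})"
    unfolding deg_def using sum.remove[OF f assms(1), of "\<mu>(t := \<mu> t - 1)"] by simp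
  show "deg n (\<mu>(t := \<mu> t - 1)) = deg n \<mu> - 1" using a b assms(2) by simp
  show "1 \<le> deg n \<mu>" using a assms(2) by simp
qed

lemma wf_deg_le1:
  assumes "wf_form n m g" "ford n g \<le> 1" "g (Some (k, \<nu>)) \<noteq> 0"
  shows "deg n \<nu> \<le> 1"
  using ford_ge[where n=n, OF wf_fsupp[OF assms(1)] assms(3)] assms(2) by simp

lemma TOP:
  assumes df: "diff_field n D" and js: "set js \<subseteq> {1..n}" and wf: "wf_form n m g" "ford n g \<le> 1"
    and dg: "Suc (length js) \<le> deg n \<mu>"
  shows "dl D js g (Some (k, \<mu>)) = (if ms js \<le> \<mu> then g (Some (k, \<mu> - ms js)) else 0)"
  using js dg
proof (induction js arbitrary: \<mu>)
  case Nil
  have "ms [] \<le> \<mu>" by (simp add: le_fun_def)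
  moreover have "\<mu> - ms [] = \<mu>" by (simp add: fun_eq_iff)
  ultimately show ?case by simp
next
  case (Cons t js)
  have t: "t \<in> {1..n}" and js: "set js \<subseteq> {1..n}" using Cons.prems by auto
  have first: "dl D js g (Some (k, \<mu>)) = 0"
  proof -
    have "Suc (length js) \<le> deg n \<mu>" using Cons.prems by simp
    then have eq: "dl D js g (Some (k, \<mu>)) = (if ms js \<le> \<mu> then g (Some (k, \<mu> - ms js)) else 0)"
      using Cons.IH js by blast
    show ?thesis
    proof (cases "ms js \<le> \<mu>")
      case True
      then have "deg n (\<mu> - ms js) = deg n \<mu> - length js" using deg_minus deg_ms[OF js] by simp
      then have "2 \<le> deg n (\<mu> - ms js)" using Cons.prems by simp
      then have "g (Some (k, \<mu> - ms js)) = 0" using wf_deg_le1[OF wf] by fastforce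
      then show ?thesis using eq by simp
    qed (use eq in simp)
  qed
  show ?case
  proof (cases "0 < \<mu> t")
    case True
    let ?\<mu>' = "\<mu>(t := \<mu> t - 1)"
    have "Suc (length js) \<le> deg n ?\<mu>'" using deg_dec[of t n \<mu>] t True Cons.prems by simp
    then have eq: "dl D js g (Some (k, ?\<mu>')) = (if ms js \<le> ?\<mu>' then g (Some (k, ?\<mu>' - ms js)) else 0)"
      using Cons.IH js by blast
    have le: "(ms js \<le> ?\<mu>') = (ms (t # js) \<le> \<mu>)"
    proof
      assume a: "ms js \<le> ?\<mu>'"
      show "ms (t # js) \<le> \<mu>" unfolding le_fun_def ms_Cons
      proof
        fix l
        have "ms js l \<le> ?\<mu>' l" using a unfolding le_fun_def by blast
        then show "(if t = l then ms js l + 1 else ms js l) \<le> \<mu> l"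
          using True by (cases "t = l") auto
      qed
    next
      assume a: "ms (t # js) \<le> \<mu>"
      show "ms js \<le> ?\<mu>'" unfolding le_fun_def
      proof
        fix l
        have "(if t = l then ms js l + 1 else ms js l) \<le> \<mu> l" using a unfolding le_fun_def ms_Cons by blast
        then show "ms js l \<le> ?\<mu>' l" by (cases "t = l") auto
      qed
    qed
    have mi: "?\<mu>' - ms js = \<mu> - ms (t # js)"
      by (rule ext) (simp add: ms_Cons)
    have "dl D (t # js) g (Some (k, \<mu>)) = dl D js g (Some (k, ?\<mu>'))"
      using True first df_zero[OF df t] by simp
    also have "\<dots> = (if ms js \<le> ?\<mu>' then g (Some (k, ?\<mu>' - ms js)) else 0)" by (rule eq)
    also have "\<dots> = (if ms (t # js) \<le> \<mu> then g (Some (k, \<mu> - ms (t # js))) else 0)"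
      by (simp only: le mi)
    finally show ?thesis .
  next
    case False
    have "\<not> ms (t # js) \<le> \<mu>"
    proof
      assume "ms (t # js) \<le> \<mu>"
      then have "ms (t # js) t \<le> \<mu> t" unfolding le_fun_def by blast
      then show False using False unfolding ms_Cons by simp
    qed
    then show ?thesis using False first df_zero[OF df t] by simp
  qed
qed

lemma ORD:
  assumes df: "diff_field n D" and js: "set js \<subseteq> {1..n}" and wf: "wf_form n m g" "ford n g \<le> 1"
    and dg: "Suc (length js) < deg n \<mu>"
  shows "dl D js g (Some (k, \<mu>)) = 0"
proof -
  have eq: "dl D js g (Some (k, \<mu>)) = (if ms js \<le> \<mu> then g (Some (k, \<mu> - ms js)) else 0)"
    using TOP[OF df js wf] dg by simp
  show ?thesis
  proof (cases "ms js \<le> \<mu>")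
    case True
    then have "deg n (\<mu> - ms js) = deg n \<mu> - length js" using deg_minus deg_ms[OF js] by simp
    then have "2 \<le> deg n (\<mu> - ms js)" using dg by simp
    then have "g (Some (k, \<mu> - ms js)) = 0" using wf_deg_le1[OF wf] by fastforce
    then show ?thesis using eq by simp
  qed (use eq in simp)
qed

lemma LEAD:
  assumes df: "diff_field n D" and js: "set js \<subseteq> {1..n}" and wf: "wf_form n m g" "ford n g \<le> 1"
    and a: "a \<in> {1..n}" and one: "g (Some (k, unitv a)) = 1"
  shows "dl D js g (Some (k, mplus (ms js) (unitv a))) = 1"
proof -
  have "deg n (mplus (ms js) (unitv a)) = Suc (length js)"
    using deg_mplus deg_ms[OF js] deg_unitv[OF a] by simp
  then have eq: "dl D js g (Some (k, mplus (ms js) (unitv a))) =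
     (if ms js \<le> mplus (ms js) (unitv a) then g (Some (k, mplus (ms js) (unitv a) - ms js)) else 0)"
    using TOP[OF df js wf] by simp
  have "ms js \<le> mplus (ms js) (unitv a)" by (simp add: le_fun_def mplus_def)
  moreover have "mplus (ms js) (unitv a) - ms js = unitv a" by (simp add: fun_eq_iff mplus_def)
  ultimately show ?thesis using eq one by simp
qed

lemma deg1:
  assumes "wf_form n m g" "g (Some (k, \<nu>)) \<noteq> 0" "deg n \<nu> = 1"
  shows "\<exists>b\<in>{1..n}. \<nu> = unitv b"
proof -
  have out: "\<forall>l. l \<notin> {1..n} \<longrightarrow> \<nu> l = 0" using assms(1,2) unfolding wf_form_def by blast
  have "\<exists>b\<in>{1..n}. 0 < \<nu> b"
  proof (rule ccontr)
    assume "\<not> ?thesis"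
    then have "deg n \<nu> = 0" unfolding deg_def by simp
    then show False using assms(3) by simp
  qed
  then obtain b where b: "b \<in> {1..n}" "0 < \<nu> b" by blast
  have f: "finite {1..n}" by simp
  have s: "deg n \<nu> = \<nu> b + sum \<nu> ({1..n} - {b})"
    unfolding deg_def using sum.remove[OF f b(1)] by simp
  have "\<nu> b = 1" using s assms(3) b(2) by linarith
  have "sum \<nu> ({1..n} - {b}) = 0" using s assms(3) b(2) by linarith
  then have "\<forall>l\<in>{1..n} - {b}. \<nu> l = 0" using sum_eq_0_iff[of "{1..n} - {b}" \<nu>] by simp
  then have z: "\<And>x. x \<in> {1..n} \<Longrightarrow> x \<noteq> b \<Longrightarrow> \<nu> x = 0" by blast
  have "\<nu> x = unitv b x" for x
  proof (cases "x = b")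
    case True then show ?thesis using \<open>\<nu> b = 1\<close> unfolding unitv_def by simp
  next
    case False then show ?thesis using z out unfolding unitv_def by (cases "x \<in> {1..n}") auto
  qed
  then have "\<nu> = unitv b" by (simp add: fun_eq_iff)
  then show ?thesis using b(1) by blast
qed

lemma key_mplus: "key n pos (mplus \<mu> \<nu>) = key n pos \<mu> + key n pos \<nu>"
  unfolding key_def mplus_def by (simp add: sum.distrib distrib_right)

lemma key_unitv: "b \<in> {1..n} \<Longrightarrow> key n pos (unitv b) = 2 ^ pos b"
proof -
  assume b: "b \<in> {1..n}"
  have "\<And>q. (if q = b then 1 else 0) * (2::nat) ^ pos q = (if q = b then 2 ^ pos q else 0)" by simp
  then show ?thesis unfolding key_def unitv_def using b by (simp add: sum.delta')
qed

lemma cls_ge: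
  assumes "j \<in> {1..n}" "e (Some (k, unitv j)) \<noteq> 0"
  shows "pos j \<le> cls n pos e"
proof -
  let ?S = "{pos j | j k. j \<in> {1..n} \<and> e (Some (k, unitv j)) \<noteq> 0}"
  have "?S \<subseteq> pos ` {1..n}" by auto
  then have "finite ?S" by (meson finite_atLeastAtMost finite_imageI finite_subset)
  moreover have "pos j \<in> ?S" using assms by auto
  ultimately show ?thesis unfolding cls_def by (simp add: Max_ge)
qed

locale sys =
  fixes D :: "nat \<Rightarrow> 'a::field \<Rightarrow> 'a" and n m :: nat and pos :: "nat \<Rightarrow> nat"
    and E :: "'a lform set" and pj :: "'a lform \<Rightarrow> nat \<times> nat"
  assumes df: "diff_field n D"
    and wfE: "\<And>e. e \<in> E \<Longrightarrow> wf_form n m e"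
    and ordE: "\<And>e. e \<in> E \<Longrightarrow> ford n e \<le> 1"
    and inj: "inj_on pos {1..n}"
    and pj_in: "\<And>e. e \<in> E \<Longrightarrow> snd (pj e) \<in> {1..n}"
    and pj_one: "\<And>e. e \<in> E \<Longrightarrow> e (Some (fst (pj e), unitv (snd (pj e)))) = 1"
    and pj_cls: "\<And>e. e \<in> E \<Longrightarrow> pos (snd (pj e)) = cls n pos e"
    and pj_zero: "\<And>e e'. e \<in> E \<Longrightarrow> e' \<in> E \<Longrightarrow> e' \<noteq> e \<Longrightarrow> e' (Some (fst (pj e), unitv (snd (pj e)))) = 0"
begin

definition mult :: "'a lform \<Rightarrow> nat \<Rightarrow> bool" where "mult e j \<longleftrightarrow> j \<in> {1..n} \<and> pos j \<le> cls n pos e"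

definition Ms :: "nat \<Rightarrow> 'a lform set" where
  "Ms s = {dl D js e | e js. e \<in> E \<and> length js \<le> s \<and> (\<forall>j\<in>set js. mult e j)}"

lemma MsI: "e \<in> E \<Longrightarrow> length js \<le> s \<Longrightarrow> \<forall>j\<in>set js. mult e j \<Longrightarrow> dl D js e \<in> Ms s"
  unfolding Ms_def by blast

lemma MsE:
  assumes "x \<in> Ms s"
  obtains e js where "e \<in> E" "length js \<le> s" "\<forall>j\<in>set js. mult e j" "x = dl D js e"
  using assms unfolding Ms_def by blast

lemma mult_set: "\<forall>j\<in>set js. mult e j \<Longrightarrow> set js \<subseteq> {1..n}"
  unfolding mult_def by auto

lemma Ms_mono: "s \<le> s' \<Longrightarrow> Ms s \<subseteq> Ms s'"
proof
  fix x assume "s \<le> s'" "x \<in> Ms s"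
  then obtain e js where "e \<in> E" "length js \<le> s" "\<forall>j\<in>set js. mult e j" "x = dl D js e"
    by (auto elim!: MsE)
  then show "x \<in> Ms s'" using MsI[of e js s'] \<open>s \<le> s'\<close> by simp
qed

lemma E_Ms: "e \<in> E \<Longrightarrow> e \<in> Ms s"
  using MsI[of e "[]" s] by simp

lemma fsupp_Ms: "x \<in> Ms s \<Longrightarrow> fsupp x"
proof -
  assume "x \<in> Ms s"
  then obtain e js where "e \<in> E" "length js \<le> s" "\<forall>j\<in>set js. mult e j" "x = dl D js e"
    by (rule MsE)
  then show "fsupp x" using fsupp_dl[OF df mult_set wf_fsupp[OF wfE]] by simp
qed

lemma prol_mono_Suc: "prol D n E r \<subseteq> prol D n E (Suc r)" by auto

lemma prol_mono: "r \<le> r' \<Longrightarrow> prol D n E r \<subseteq> prol D n E r'"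
  by (induction r' rule: dec_induct) (use prol_mono_Suc in blast)+

lemma dl_prol: "e \<in> E \<Longrightarrow> set js \<subseteq> {1..n} \<Longrightarrow> dl D js e \<in> prol D n E (length js)"
  by (induction js) auto

lemma Ms_prol: "Ms s \<subseteq> prol D n E s"
proof
  fix x assume "x \<in> Ms s"
  then obtain e js where "e \<in> E" "length js \<le> s" "\<forall>j\<in>set js. mult e j" "x = dl D js e"
    by (rule MsE)
  then show "x \<in> prol D n E s" using dl_prol[of e js] mult_set prol_mono by blast
qed

lemma Ms_1: "Ms 1 = mult_prol D n pos E"
proof
  show "Ms 1 \<subseteq> mult_prol D n pos E"
  proof
    fix x assume "x \<in> Ms 1"
    then obtain e js where e: "e \<in> E" "length js \<le> 1" "\<forall>j\<in>set js. mult e j" "x = dl D js e"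
      by (rule MsE)
    show "x \<in> mult_prol D n pos E"
    proof (cases js)
      case Nil then show ?thesis using e unfolding mult_prol_def by simp
    next
      case (Cons j r)
      then have "js = [j]" using e(2) by simp
      then show ?thesis using e unfolding mult_prol_def mult_def by auto
    qed
  qed
next
  show "mult_prol D n pos E \<subseteq> Ms 1"
  proof
    fix x assume "x \<in> mult_prol D n pos E"
    then consider "x \<in> E" | j e where "e \<in> E" "j \<in> {1..n}" "pos j \<le> cls n pos e" "x = ldiff D j e"
      unfolding mult_prol_def by blast
    then show "x \<in> Ms 1"
    proof cases
      case 1 then show ?thesis by (rule E_Ms)
    next
      case 2 then show ?thesis using MsI[of e "[j]" 1] unfolding mult_def by simp
    qed
  qed
qed

lemma closure:
  assumes loc: "\<And>f j. f \<in> E \<Longrightarrow> j \<in> {1..n} \<Longrightarrow> ldiff D j f \<in> lspan (Ms 1)"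
  shows "h \<in> Ms s \<Longrightarrow> j \<in> {1..n} \<Longrightarrow> ldiff D j h \<in> lspan (Ms (Suc s))"
proof (induction s arbitrary: h j)
  case 0
  obtain e js where e: "e \<in> E" "length js \<le> 0" "\<forall>t\<in>set js. mult e t" "h = dl D js e"
    using 0(1) by (rule MsE)
  then have "h = e" by simp
  then show ?case using loc[OF e(1) 0(2)] by simp
next
  case (Suc s)
  have main: "\<forall>h j. h \<in> Ms (Suc s) \<longrightarrow> j \<in> {1..n} \<longrightarrow> pos j = p \<longrightarrow> ldiff D j h \<in> lspan (Ms (Suc (Suc s)))" for p
  proof (induction p rule: less_induct)
    case (less p)
    show ?case
    proof (intro allI impI)
      fix h j assume h: "h \<in> Ms (Suc s)" and j: "j \<in> {1..n}" and pjp: "pos j = p"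
      obtain f js where f: "f \<in> E" "length js \<le> Suc s" "\<forall>t\<in>set js. mult f t" "h = dl D js f"
        using h by (rule MsE)
      show "ldiff D j h \<in> lspan (Ms (Suc (Suc s)))"
      proof (cases "length js \<le> s")
        case True
        then have "h \<in> Ms s" using MsI[of f js s] f by simp
        then have "ldiff D j h \<in> lspan (Ms (Suc s))" using Suc.IH j by blast
        then show ?thesis using lspan_mono[OF Ms_mono[of "Suc s" "Suc (Suc s)"]] by (meson le_SucI order_refl subsetD)
      next
        case False
        show ?thesis
        proof (cases "mult f j")
          case True
          have "ldiff D j h \<in> Ms (Suc (Suc s))" using MsI[of f "j # js" "Suc (Suc s)"] f True by simp
          then show ?thesis by (rule lspan_mem)
        next
          case nm: False
          obtain t js'' where js: "js = t # js''" using False by (cases js) auto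
          have t: "mult f t" using f js by simp
          have tn: "t \<in> {1..n}" using t mult_def by auto
          have ptj: "pos t < pos j" using t nm j unfolding mult_def by auto
          have h'': "dl D js'' f \<in> Ms s" using f js MsI[of f js'' s] by simp
          have A: "ldiff D j (dl D js'' f) \<in> lspan (Ms (Suc s))" using Suc.IH[OF h'' j] .
          have eq: "ldiff D j h = ldiff D t (ldiff D j (dl D js'' f))"
            unfolding f(4) js dl_Cons by (rule ldiff_comm[OF df j tn])
          have "ldiff D t (ldiff D j (dl D js'' f)) \<in> lspan (Ms (Suc (Suc s)))"
          proof (rule ldiff_lspan[OF df tn A])
            show "Ms (Suc s) \<subseteq> lspan (Ms (Suc (Suc s)))"
            proof
              fix x assume "x \<in> Ms (Suc s)"
              then have "x \<in> Ms (Suc (Suc s))" using Ms_mono[of "Suc s" "Suc (Suc s)"] by auto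
              then show "x \<in> lspan (Ms (Suc (Suc s)))" by (rule lspan_mem)
            qed
            have "pos t < p" using ptj pjp by simp
            note IHt = less.IH[OF this]
            show "\<forall>e\<in>Ms (Suc s). ldiff D t e \<in> lspan (Ms (Suc (Suc s)))"
            proof
              fix e assume "e \<in> Ms (Suc s)"
              then show "ldiff D t e \<in> lspan (Ms (Suc (Suc s)))" using IHt tn by blast
            qed
          qed
          then show ?thesis using eq by simp
        qed
      qed
    qed
  qed
  show ?case using main[of "pos j"] Suc.prems by simp
qed

lemma Ms_lspan_Suc: "Ms r \<subseteq> lspan (Ms (Suc r))"
proof
  fix x assume "x \<in> Ms r"
  then have "x \<in> Ms (Suc r)" using Ms_mono[of r "Suc r"] by auto
  then show "x \<in> lspan (Ms (Suc r))" by (rule lspan_mem)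
qed

lemma prol_Ms:
  assumes loc: "\<And>f j. f \<in> E \<Longrightarrow> j \<in> {1..n} \<Longrightarrow> ldiff D j f \<in> lspan (Ms 1)"
  shows "prol D n E r \<subseteq> lspan (Ms r)"
proof (induction r)
  case 0
  show ?case
  proof
    fix x assume "x \<in> prol D n E 0"
    then have "x \<in> Ms 0" using E_Ms by simp
    then show "x \<in> lspan (Ms 0)" by (rule lspan_mem)
  qed
next
  case (Suc r)
  show ?case
  proof
    fix x assume "x \<in> prol D n E (Suc r)"
    then consider "x \<in> prol D n E r" | i e where "i \<in> {1..n}" "e \<in> prol D n E r" "x = ldiff D i e"
      by auto
    then show "x \<in> lspan (Ms (Suc r))"
    proof cases
      case 1
      then have "x \<in> lspan (Ms r)" using Suc by (rule subsetD[rotated])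
      then show ?thesis using lspan_mono[OF Ms_mono[of r "Suc r"]] by (meson le_SucI order_refl subsetD)
    next
      case 2
      have e: "e \<in> lspan (Ms r)" using 2(2) Suc by (rule subsetD[rotated])
      have c: "\<forall>y\<in>Ms r. ldiff D i y \<in> lspan (Ms (Suc r))"
      proof
        fix y assume "y \<in> Ms r"
        then show "ldiff D i y \<in> lspan (Ms (Suc r))" using closure[OF loc] 2(1) by blast
      qed
      show ?thesis unfolding 2(3) by (rule ldiff_lspan[OF df 2(1) e Ms_lspan_Suc c])
    qed
  qed
qed

end

context sys begin

lemma tri:
  assumes g: "g \<in> E" and g': "g' \<in> E" and mg: "\<forall>j\<in>set js. mult g j" and mg': "\<forall>j\<in>set js'. mult g' j"
    and len: "length js' = length js"
    and nz: "dl D js' g' (Some (fst (pj g), mplus (ms js) (unitv (snd (pj g))))) \<noteq> 0"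
  shows "key n pos (mplus (ms js) (unitv (snd (pj g)))) < key n pos (mplus (ms js') (unitv (snd (pj g'))))
         \<or> (g' = g \<and> ms js' = ms js)"
proof -
  define k where "k = fst (pj g)"
  define a where "a = snd (pj g)"
  define a' where "a' = snd (pj g')"
  define \<mu> where "\<mu> = mplus (ms js) (unitv a)"
  have js: "set js \<subseteq> {1..n}" using mult_set[OF mg] .
  have js': "set js' \<subseteq> {1..n}" using mult_set[OF mg'] .
  have a: "a \<in> {1..n}" using pj_in[OF g] a_def by simp
  have a': "a' \<in> {1..n}" using pj_in[OF g'] a'_def by simp
  have dmu: "deg n \<mu> = Suc (length js')"
    unfolding \<mu>_def using deg_mplus deg_ms[OF js] deg_unitv[OF a] len by simp
  have nz': "dl D js' g' (Some (k, \<mu>)) \<noteq> 0" using nz k_def a_def \<mu>_def by simp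
  have eq: "dl D js' g' (Some (k, \<mu>)) = (if ms js' \<le> \<mu> then g' (Some (k, \<mu> - ms js')) else 0)"
    using TOP[OF df js' wfE[OF g'] ordE[OF g']] dmu by simp
  have le: "ms js' \<le> \<mu>" and gnz: "g' (Some (k, \<mu> - ms js')) \<noteq> 0"
    using nz' eq by (auto split: if_splits)
  have "deg n (\<mu> - ms js') = 1" using deg_minus[OF le] deg_ms[OF js'] dmu by simp
  then obtain b where b: "b \<in> {1..n}" "\<mu> - ms js' = unitv b"
    using deg1[OF wfE[OF g'] gnz] by blast
  have mu': "\<mu> = mplus (ms js') (unitv b)"
  proof
    fix l have "ms js' l \<le> \<mu> l" using le unfolding le_fun_def by blast
    then show "\<mu> l = mplus (ms js') (unitv b) l"
      using fun_cong[OF b(2), of l] unfolding mplus_def by simp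
  qed
  have gb: "g' (Some (k, unitv b)) \<noteq> 0" using gnz b(2) by simp
  have pb: "pos b \<le> pos a'" using cls_ge[where pos=pos and e=g', OF b(1) gb] pj_cls[OF g'] a'_def by simp
  show ?thesis
  proof (cases "b = a'")
    case False
    then have "pos b \<noteq> pos a'" using inj b(1) a' unfolding inj_on_def by blast
    then have "pos b < pos a'" using pb by simp
    then have "(2::nat) ^ pos b < 2 ^ pos a'" by simp
    then have "key n pos \<mu> < key n pos (mplus (ms js') (unitv a'))"
      unfolding mu' key_mplus key_unitv[OF b(1)] key_unitv[OF a'] by simp
    then show ?thesis unfolding \<mu>_def a_def a'_def by simp
  next
    case True
    have E2: "mplus (ms js) (unitv a) = mplus (ms js') (unitv a')" using mu' True \<mu>_def by simp
    have aa: "a = a'"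
    proof (rule ccontr)
      assume ne: "a \<noteq> a'"
      have "ms js a' + unitv a a' = ms js' a' + unitv a' a'" using fun_cong[OF E2, of a'] unfolding mplus_def .
      then have "ms js a' \<noteq> 0" using ne unfolding unitv_def by simp
      then have "a' \<in> set js" unfolding ms_def using count_list_0_iff by metis
      then have p1: "pos a' \<le> pos a" using mg pj_cls[OF g] a_def unfolding mult_def by simp
      have "ms js a + unitv a a = ms js' a + unitv a' a" using fun_cong[OF E2, of a] unfolding mplus_def .
      then have "ms js' a \<noteq> 0" using ne unfolding unitv_def by simp
      then have "a \<in> set js'" unfolding ms_def using count_list_0_iff by metis
      then have p2: "pos a \<le> pos a'" using mg' pj_cls[OF g'] a'_def unfolding mult_def by simp
      have "pos a = pos a'" using p1 p2 by simp
      then show False using inj a a' ne unfolding inj_on_def by blast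
    qed
    have "g' (Some (fst (pj g), unitv (snd (pj g)))) \<noteq> 0" using gb True aa k_def a_def by simp
    then have gg: "g' = g" using pj_zero[OF g g'] by blast
    have "ms js' = ms js"
    proof
      fix l show "ms js' l = ms js l" using fun_cong[OF E2, of l] aa unfolding mplus_def by simp
    qed
    then show ?thesis using gg by simp
  qed
qed

lemma fi:
  assumes P: "P \<in> lspan (Ms (Suc r))" and oP: "ford n P \<le> Suc r"
  shows "P \<in> lspan (Ms r)"
proof -
  obtain F c where F: "finite F" "F \<subseteq> Ms (Suc r)" "P = (\<lambda>x. \<Sum>e\<in>F. c e * e x)"
    using P unfolding lspan_def by auto
  have fsP: "fsupp P" unfolding F(3) by (rule fsupp_comb[OF F(1)]) (use F(2) fsupp_Ms in blast)
  define T where "T = {x\<in>F. x \<notin> Ms r \<and> c x \<noteq> 0}"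
  have "T = {}"
  proof (rule ccontr)
    assume Tne: "T \<noteq> {}"
    define R where "R x = (SOME p. fst p \<in> E \<and> length (snd p) \<le> Suc r \<and> (\<forall>j\<in>set (snd p). mult (fst p) j)
                                \<and> x = dl D (snd p) (fst p))" for x
    have Rp: "fst (R x) \<in> E \<and> length (snd (R x)) = Suc r \<and> (\<forall>j\<in>set (snd (R x)). mult (fst (R x)) j)
                \<and> x = dl D (snd (R x)) (fst (R x))" if x: "x \<in> T" for x
    proof -
      have "x \<in> Ms (Suc r)" using x F(2) unfolding T_def by auto
      then obtain g js where gjs: "g \<in> E" "length js \<le> Suc r" "\<forall>j\<in>set js. mult g j" "x = dl D js g"
        by (rule MsE)
      have ex: "\<exists>p. fst p \<in> E \<and> length (snd p) \<le> Suc r \<and> (\<forall>j\<in>set (snd p). mult (fst p) j)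
                                \<and> x = dl D (snd p) (fst p)"
        using gjs by (intro exI[of _ "(g, js)"]) simp
      have S: "fst (R x) \<in> E \<and> length (snd (R x)) \<le> Suc r \<and> (\<forall>j\<in>set (snd (R x)). mult (fst (R x)) j)
                                \<and> x = dl D (snd (R x)) (fst (R x))"
        unfolding R_def by (rule someI_ex[OF ex])
      have "\<not> length (snd (R x)) \<le> r"
      proof
        assume "length (snd (R x)) \<le> r"
        then have "x \<in> Ms r" using S MsI[of "fst (R x)" "snd (R x)" r] by simp
        then show False using x unfolding T_def by simp
      qed
      then show ?thesis using S by simp
    qed
    define L where "L x = mplus (ms (snd (R x))) (unitv (snd (pj (fst (R x)))))" for x
    have fT: "finite T" using F(1) unfolding T_def by simp
    define M where "M = Max ((\<lambda>x. key n pos (L x)) ` T)"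
    have "M \<in> (\<lambda>x. key n pos (L x)) ` T" unfolding M_def using fT Tne by (intro Max_in) auto
    then obtain x0 where x0: "x0 \<in> T" "key n pos (L x0) = M" by blast
    have x0max: "key n pos (L x) \<le> key n pos (L x0)" if "x \<in> T" for x
      unfolding x0(2) M_def using fT that by (intro Max_ge) auto
    define g0 where "g0 = fst (R x0)"
    define js0 where "js0 = snd (R x0)"
    define k0 where "k0 = fst (pj g0)"
    have R0: "g0 \<in> E" "length js0 = Suc r" "\<forall>j\<in>set js0. mult g0 j" "x0 = dl D js0 g0"
      using Rp[OF x0(1)] g0_def js0_def by auto
    have js0: "set js0 \<subseteq> {1..n}" using mult_set[OF R0(3)] .
    have L0: "L x0 = mplus (ms js0) (unitv (snd (pj g0)))" unfolding L_def g0_def js0_def by simp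
    have degL: "deg n (L x0) = Suc (Suc r)"
      unfolding L0 using deg_mplus deg_ms[OF js0] deg_unitv[OF pj_in[OF R0(1)]] R0(2) by simp
    have lead: "x0 (Some (k0, L x0)) = 1"
    proof -
      have "dl D js0 g0 (Some (k0, mplus (ms js0) (unitv (snd (pj g0))))) = 1" unfolding k0_def
        by (rule LEAD[OF df js0 wfE[OF R0(1)] ordE[OF R0(1)] pj_in[OF R0(1)] pj_one[OF R0(1)]])
      then show ?thesis unfolding L0 using R0(4) by simp
    qed
    have others: "c x * x (Some (k0, L x0)) = 0" if x: "x \<in> F - {x0}" for x
    proof (cases "c x = 0")
      case False
      show ?thesis
      proof (cases "x \<in> Ms r")
        case True
        then obtain g js where gjs: "g \<in> E" "length js \<le> r" "\<forall>j\<in>set js. mult g j" "x = dl D js g"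
          by (rule MsE)
        have "x (Some (k0, L x0)) = 0" unfolding gjs(4)
          by (rule ORD[OF df mult_set[OF gjs(3)] wfE[OF gjs(1)] ordE[OF gjs(1)]]) (use degL gjs(2) in simp)
        then show ?thesis by simp
      next
        case nMs: False
        then have xT: "x \<in> T" using x False unfolding T_def by simp
        have Rx: "fst (R x) \<in> E" "length (snd (R x)) = Suc r" "\<forall>j\<in>set (snd (R x)). mult (fst (R x)) j"
            "x = dl D (snd (R x)) (fst (R x))" using Rp[OF xT] by auto
        have "x (Some (k0, L x0)) = 0"
        proof (rule ccontr)
          assume nz: "x (Some (k0, L x0)) \<noteq> 0"
          have nz2: "dl D (snd (R x)) (fst (R x)) (Some (fst (pj g0), mplus (ms js0) (unitv (snd (pj g0))))) \<noteq> 0"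
            using nz Rx(4) L0 k0_def by simp
          have "key n pos (mplus (ms js0) (unitv (snd (pj g0)))) < key n pos (mplus (ms (snd (R x))) (unitv (snd (pj (fst (R x))))))
             \<or> (fst (R x) = g0 \<and> ms (snd (R x)) = ms js0)"
            by (rule tri[OF R0(1) Rx(1) R0(3) Rx(3)]) (use Rx(2) R0(2) nz2 in simp_all)
          then show False
          proof
            assume "key n pos (mplus (ms js0) (unitv (snd (pj g0)))) < key n pos (mplus (ms (snd (R x))) (unitv (snd (pj (fst (R x))))))"
            then have "key n pos (L x0) < key n pos (L x)" unfolding L0 L_def g0_def js0_def by simp
            then show False using x0max[OF xT] by simp
          next
            assume a: "fst (R x) = g0 \<and> ms (snd (R x)) = ms js0"
            have "x = dl D (snd (R x)) g0" using Rx(4) a by simp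
            also have "\<dots> = dl D js0 g0"
              by (rule dl_ms[OF df]) (use a mult_set[OF Rx(3)] in simp_all)
            finally have "x = x0" using R0(4) by simp
            then show False using x by simp
          qed
        qed
        then show ?thesis by simp
      qed
    qed simp
    have x0F: "x0 \<in> F" using x0(1) unfolding T_def by simp
    have "P (Some (k0, L x0)) = c x0 * x0 (Some (k0, L x0)) + (\<Sum>x\<in>F - {x0}. c x * x (Some (k0, L x0)))"
      unfolding F(3) using sum.remove[OF F(1) x0F] by simp
    also have "\<dots> = c x0"
    proof -
      have "(\<Sum>x\<in>F - {x0}. c x * x (Some (k0, L x0))) = 0" using others by (intro sum.neutral) blast
      then show ?thesis using lead by simp
    qed
    finally have "P (Some (k0, L x0)) \<noteq> 0" using x0(1) unfolding T_def by simp
    then have "deg n (L x0) \<le> ford n P" by (rule ford_ge[OF fsP])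
    then show False using degL oP by simp
  qed
  then have "\<forall>e\<in>F. c e \<noteq> 0 \<longrightarrow> e \<in> Ms r" unfolding T_def by blast
  then show ?thesis by (rule lspan_nz[OF F(1) F(3)])
qed

theorem involutive_sys:
  assumes loc: "\<And>f j. f \<in> E \<Longrightarrow> j \<in> {1..n} \<Longrightarrow> ldiff D j f \<in> lspan (Ms 1)"
  shows "involutive D n 1 pos E"
proof -
  have sf: "solved_form n pos E"
    unfolding solved_form_def using pj_in pj_one pj_cls pj_zero by (intro exI[of _ pj]) blast
  have fi': "formally_integrable D n 1 E"
    unfolding formally_integrable_def
  proof (intro allI subsetI)
    fix r P assume "P \<in> {P \<in> lspan (prol D n E (Suc r)). ford n P \<le> 1 + r}"
    then have P: "P \<in> lspan (prol D n E (Suc r))" "ford n P \<le> Suc r" by auto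
    have "P \<in> lspan (Ms (Suc r))" using lspan_subset[OF prol_Ms[OF loc]] P(1) by blast
    then have "P \<in> lspan (Ms r)" using fi P(2) by blast
    then show "P \<in> lspan (prol D n E r)" using lspan_mono[OF Ms_prol] by blast
  qed
  have "lspan (prol D n E 1) = lspan (mult_prol D n pos E)"
  proof
    show "lspan (prol D n E 1) \<subseteq> lspan (mult_prol D n pos E)"
      using lspan_subset[OF prol_Ms[OF loc, of 1]] Ms_1 by simp
    show "lspan (mult_prol D n pos E) \<subseteq> lspan (prol D n E 1)"
      using lspan_mono[OF Ms_prol[of 1]] Ms_1 by simp
  qed
  then show ?thesis unfolding involutive_def using sf fi' by simp
qed

end

lemma unitv_notin_zero:
  assumes "wf_form n m e" "e (Some (k, unitv j)) \<noteq> 0"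
  shows "j \<in> {1..n}"
proof (rule ccontr)
  assume "j \<notin> {1..n}"
  then have "unitv j j = 0" using assms unfolding wf_form_def by blast
  then show False unfolding unitv_def by simp
qed

lemma jets_le:
  assumes "wf_form n m e" "e (Some (k, unitv j)) \<noteq> 0"
  shows "j \<in> {1..n}" "j \<le> cls n id e"
  using unitv_notin_zero[OF assms] cls_ge[where pos=id and e=e, OF unitv_notin_zero[OF assms] assms(2)] by auto

lemma cls_alt: "cls n pos e = Max (insert 0 (pos ` {j\<in>{1..n}. \<exists>k. e (Some (k, unitv j)) \<noteq> 0}))"
proof -
  have "{pos j | j k. j \<in> {1..n} \<and> e (Some (k, unitv j)) \<noteq> 0} = pos ` {j\<in>{1..n}. \<exists>k. e (Some (k, unitv j)) \<noteq> 0}"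
    by auto
  then show ?thesis unfolding cls_def by simp
qed

lemma Max_insert0: "finite (A::nat set) \<Longrightarrow> A \<noteq> {} \<Longrightarrow> Max (insert 0 A) = Max A"
  by (simp add: max_def)

lemma cls_shift:
  assumes S: "{j\<in>{1..n}. \<exists>k. e (Some (k, unitv j)) \<noteq> 0} \<subseteq> {..i}"
    and ne: "{j\<in>{1..n}. \<exists>k. e (Some (k, unitv j)) \<noteq> 0} \<noteq> {}"
  shows "cls n (shift_order n i) e = cls n id e + (n - i)"
proof -
  let ?S = "{j\<in>{1..n}. \<exists>k. e (Some (k, unitv j)) \<noteq> 0}"
  have fS: "finite ?S" by simp
  have im: "shift_order n i ` ?S = (\<lambda>j. j + (n - i)) ` ?S"
    using S unfolding shift_order_def by (intro image_cong) auto
  have "cls n (shift_order n i) e = Max ((\<lambda>j. j + (n - i)) ` ?S)"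
    unfolding cls_alt im using fS ne by (simp add: Max_insert0)
  also have "\<dots> = Max ?S + (n - i)"
    using mono_Max_commute[of "\<lambda>j. j + (n - i)" ?S] fS ne by (simp add: mono_def)
  also have "Max ?S = cls n id e"
    unfolding cls_alt using fS ne by (simp add: Max_insert0)
  finally show ?thesis .
qed

lemma inj_shift: "i \<in> {1..n} \<Longrightarrow> inj_on (shift_order n i) {1..n}"
  unfolding inj_on_def shift_order_def by auto

lemma B_sep:
  assumes sysE: "sys D n m id E pj" and inv1: "lspan (prol D n E 1) = lspan (mult_prol D n id E)"
    and f: "f \<in> E" "cls n id f \<le> i" and j: "j \<in> {1..n}" "j \<le> i"
  shows "ldiff D j f \<in> lspan {x. (x \<in> E \<and> cls n id x \<le> i) \<or>
     (\<exists>g l. g \<in> E \<and> cls n id g \<le> i \<and> l \<in> {1..n} \<and> l \<le> cls n id g \<and> x = ldiff D l g)}"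
    (is "_ \<in> lspan ?G")
proof -
  interpret S: sys D n m id E pj by (rule sysE)
  let ?P = "ldiff D j f"
  have "?P \<in> prol D n E 1" using f j by auto
  then have "?P \<in> lspan (prol D n E 1)" by (rule lspan_mem)
  then have "?P \<in> lspan (mult_prol D n id E)" using inv1 by simp
  then obtain F c where F: "finite F" "F \<subseteq> mult_prol D n id E" "?P = (\<lambda>x. \<Sum>e\<in>F. c e * e x)"
    unfolding lspan_def by auto
  have Fcases: "x \<in> E \<or> (\<exists>g l. g \<in> E \<and> l \<in> {1..n} \<and> l \<le> cls n id g \<and> x = ldiff D l g)" if "x \<in> F" for x
    using that F(2) unfolding mult_prol_def by auto
  have H: "ldiff D l g (Some (k, \<mu>)) = 0"
    if g: "g \<in> E" "cls n id g \<le> i" and l: "l \<in> {1..n}" "l \<le> i" and dm: "deg n \<mu> = 2"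
      and a: "i < a" "0 < \<mu> a" for g l k \<mu> a
  proof (rule ccontr)
    assume nz: "ldiff D l g (Some (k, \<mu>)) \<noteq> 0"
    have ls: "set [l] \<subseteq> {1..n}" using l by simp
    have "dl D [l] g (Some (k, \<mu>)) = (if ms [l] \<le> \<mu> then g (Some (k, \<mu> - ms [l])) else 0)"
      using TOP[OF S.df ls S.wfE[OF g(1)] S.ordE[OF g(1)]] dm by simp
    then have le: "ms [l] \<le> \<mu>" and gnz: "g (Some (k, \<mu> - ms [l])) \<noteq> 0" using nz by (auto split: if_splits)
    have "deg n (\<mu> - ms [l]) = 1" using deg_minus[OF le] deg_ms[OF ls] dm by simp
    then obtain b where b: "b \<in> {1..n}" "\<mu> - ms [l] = unitv b" using deg1[OF S.wfE[OF g(1)] gnz] by blast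
    have "b \<le> cls n id g" using jets_le(2)[OF S.wfE[OF g(1)]] gnz b(2) by simp
    then have "b \<noteq> a" "l \<noteq> a" using g(2) l(2) a(1) by auto
    have "\<mu> a - ms [l] a = unitv b a" using fun_cong[OF b(2), of a] by simp
    then show False using \<open>b \<noteq> a\<close> \<open>l \<noteq> a\<close> a(2) unfolding unitv_def ms_def by simp
  qed
  define Bad2 where "Bad2 = {x\<in>F. c x \<noteq> 0 \<and> (\<exists>g l. g \<in> E \<and> i < cls n id g \<and> l \<in> {1..n} \<and> l \<le> cls n id g \<and> x = ldiff D l g)}"
  have B2: "Bad2 = {}"
  proof (rule ccontr)
    assume Bne: "Bad2 \<noteq> {}"
    define R where "R x = (SOME p. fst p \<in> E \<and> i < cls n id (fst p) \<and> snd p \<in> {1..n} \<and> snd p \<le> cls n id (fst p)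
          \<and> x = ldiff D (snd p) (fst p))" for x
    have Rp: "fst (R x) \<in> E \<and> i < cls n id (fst (R x)) \<and> snd (R x) \<in> {1..n} \<and> snd (R x) \<le> cls n id (fst (R x))
          \<and> x = ldiff D (snd (R x)) (fst (R x))" if x: "x \<in> Bad2" for x
    proof -
      obtain g l where "g \<in> E \<and> i < cls n id g \<and> l \<in> {1..n} \<and> l \<le> cls n id g \<and> x = ldiff D l g"
        using x unfolding Bad2_def by blast
      then have ex: "\<exists>p. fst p \<in> E \<and> i < cls n id (fst p) \<and> snd p \<in> {1..n} \<and> snd p \<le> cls n id (fst p)
          \<and> x = ldiff D (snd p) (fst p)" by (intro exI[of _ "(g, l)"]) simp
      show ?thesis unfolding R_def by (rule someI_ex[OF ex])
    qed
    define L where "L x = mplus (ms [snd (R x)]) (unitv (snd (pj (fst (R x)))))" for x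
    have fB: "finite Bad2" using F(1) unfolding Bad2_def by simp
    define M where "M = Max ((\<lambda>x. key n id (L x)) ` Bad2)"
    have "M \<in> (\<lambda>x. key n id (L x)) ` Bad2" unfolding M_def using fB Bne by (intro Max_in) auto
    then obtain x0 where x0: "x0 \<in> Bad2" "key n id (L x0) = M" by blast
    have x0max: "key n id (L x) \<le> key n id (L x0)" if "x \<in> Bad2" for x
      unfolding x0(2) M_def using fB that by (intro Max_ge) auto
    define g0 where "g0 = fst (R x0)"
    define l0 where "l0 = snd (R x0)"
    define k0 where "k0 = fst (pj g0)"
    define a0 where "a0 = snd (pj g0)"
    have R0: "g0 \<in> E" "i < cls n id g0" "l0 \<in> {1..n}" "l0 \<le> cls n id g0" "x0 = ldiff D l0 g0"
      using Rp[OF x0(1)] g0_def l0_def by auto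
    have a0: "a0 \<in> {1..n}" "a0 = cls n id g0" using S.pj_in[OF R0(1)] S.pj_cls[OF R0(1)] a0_def by auto
    have m0: "\<forall>j\<in>set [l0]. S.mult g0 j" using R0 unfolding S.mult_def by simp
    have L0: "L x0 = mplus (ms [l0]) (unitv a0)" unfolding L_def g0_def l0_def a0_def by simp
    have degL: "deg n (L x0) = 2" unfolding L0 using deg_mplus deg_ms[of "[l0]" n] deg_unitv[OF a0(1)] R0(3) by simp
    have La: "0 < L x0 a0" unfolding L0 mplus_def unitv_def by simp
    have lead: "x0 (Some (k0, L x0)) = 1"
    proof -
      have "dl D [l0] g0 (Some (k0, mplus (ms [l0]) (unitv a0))) = 1" unfolding k0_def a0_def
        by (rule LEAD[OF S.df _ S.wfE[OF R0(1)] S.ordE[OF R0(1)] S.pj_in[OF R0(1)] S.pj_one[OF R0(1)]])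
           (use R0(3) in simp)
      then show ?thesis unfolding L0 using R0(5) by simp
    qed
    have P0: "?P (Some (k0, L x0)) = 0"
      by (rule H[OF f j(1) j(2) degL _ La]) (use a0 R0(2) in simp)
    have others: "c x * x (Some (k0, L x0)) = 0" if x: "x \<in> F - {x0}" for x
    proof (cases "c x = 0")
      case cx: False
      have xF: "x \<in> F" using x by simp
      show ?thesis
      proof (cases "x \<in> E")
        case True
        have "dl D [] x (Some (k0, L x0)) = 0"
          by (rule ORD[OF S.df _ S.wfE[OF True] S.ordE[OF True]]) (use degL in simp_all)
        then show ?thesis by simp
      next
        case False
        then obtain g l where gl: "g \<in> E" "l \<in> {1..n}" "l \<le> cls n id g" "x = ldiff D l g"
          using Fcases[OF xF] by blast
        show ?thesis
        proof (cases "cls n id g \<le> i")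
          case True
          have "x (Some (k0, L x0)) = 0" unfolding gl(4)
            by (rule H[OF gl(1) True gl(2) _ degL _ La]) (use gl(3) True a0 R0(2) in simp_all)
          then show ?thesis by simp
        next
          case ncl: False
          have xB: "x \<in> Bad2" unfolding Bad2_def using xF cx gl ncl by auto
          have Rx: "fst (R x) \<in> E" "snd (R x) \<in> {1..n}" "snd (R x) \<le> cls n id (fst (R x))"
            "x = ldiff D (snd (R x)) (fst (R x))" using Rp[OF xB] by auto
          have mx: "\<forall>j\<in>set [snd (R x)]. S.mult (fst (R x)) j" using Rx unfolding S.mult_def by simp
          have "x (Some (k0, L x0)) = 0"
          proof (rule ccontr)
            assume nz: "x (Some (k0, L x0)) \<noteq> 0"
            have nz2: "dl D [snd (R x)] (fst (R x)) (Some (fst (pj g0), mplus (ms [l0]) (unitv (snd (pj g0))))) \<noteq> 0"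
              using nz Rx(4) L0 k0_def a0_def by simp
            have "key n id (mplus (ms [l0]) (unitv (snd (pj g0)))) < key n id (mplus (ms [snd (R x)]) (unitv (snd (pj (fst (R x))))))
               \<or> (fst (R x) = g0 \<and> ms [snd (R x)] = ms [l0])"
              by (rule S.tri[OF R0(1) Rx(1) m0 mx]) (use nz2 in simp_all)
            then show False
            proof
              assume "key n id (mplus (ms [l0]) (unitv (snd (pj g0)))) < key n id (mplus (ms [snd (R x)]) (unitv (snd (pj (fst (R x))))))"
              then have "key n id (L x0) < key n id (L x)" unfolding L0 L_def a0_def g0_def l0_def by simp
              then show False using x0max[OF xB] by simp
            next
              assume a: "fst (R x) = g0 \<and> ms [snd (R x)] = ms [l0]"
              have "x = dl D [snd (R x)] g0" using Rx(4) a by simp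
              also have "\<dots> = dl D [l0] g0"
                by (rule dl_ms[OF S.df]) (use a Rx(2) in simp_all)
              finally have "x = x0" using R0(5) by simp
              then show False using x by simp
            qed
          qed
          then show ?thesis by simp
        qed
      qed
    qed simp
    have x0F: "x0 \<in> F" using x0(1) unfolding Bad2_def by simp
    have "?P (Some (k0, L x0)) = c x0 * x0 (Some (k0, L x0)) + (\<Sum>x\<in>F - {x0}. c x * x (Some (k0, L x0)))"
      unfolding F(3) using sum.remove[OF F(1) x0F] by simp
    also have "\<dots> = c x0"
    proof -
      have "(\<Sum>x\<in>F - {x0}. c x * x (Some (k0, L x0))) = 0" using others by (intro sum.neutral) blast
      then show ?thesis using lead by simp
    qed
    finally have "c x0 = 0" using P0 by simp
    then show False using x0(1) unfolding Bad2_def by simp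
  qed
  have B1: "\<not> (c x \<noteq> 0 \<and> x \<in> E \<and> i < cls n id x)" if xF: "x \<in> F" for x
  proof
    assume bx: "c x \<noteq> 0 \<and> x \<in> E \<and> i < cls n id x"
    define k where "k = fst (pj x)"
    define a where "a = snd (pj x)"
    have xE: "x \<in> E" using bx by simp
    have a: "a \<in> {1..n}" "a = cls n id x" using S.pj_in[OF xE] S.pj_cls[OF xE] a_def by auto
    have fx: "f \<noteq> x" using bx f(2) by auto
    have "f (Some (k, unitv a)) = 0" using S.pj_zero[OF xE f(1) fx] k_def a_def by simp
    moreover have "unitv a j = 0" using a bx j(2) unfolding unitv_def by simp
    ultimately have P0: "?P (Some (k, unitv a)) = 0" using df_zero[OF S.df j(1)] by simp
    have others: "c y * y (Some (k, unitv a)) = 0" if y: "y \<in> F - {x}" for y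
    proof (cases "c y = 0")
      case cy: False
      have yF: "y \<in> F" using y by simp
      show ?thesis
      proof (cases "y \<in> E")
        case True
        then show ?thesis using S.pj_zero[OF xE True] y k_def a_def by simp
      next
        case False
        then obtain g l where gl: "g \<in> E" "l \<in> {1..n}" "l \<le> cls n id g" "y = ldiff D l g"
          using Fcases[OF yF] by blast
        have "cls n id g \<le> i"
        proof (rule ccontr)
          assume "\<not> cls n id g \<le> i"
          then have "y \<in> Bad2" unfolding Bad2_def using yF cy gl by auto
          then show False using B2 by simp
        qed
        then have gx: "g \<noteq> x" using bx by auto
        have "g (Some (k, unitv a)) = 0" using S.pj_zero[OF xE gl(1) gx] k_def a_def by simp
        moreover have "unitv a l = 0" using a bx gl(3) \<open>cls n id g \<le> i\<close> unfolding unitv_def by simp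
        ultimately show ?thesis using gl(4) df_zero[OF S.df gl(2)] by simp
      qed
    qed simp
    have "?P (Some (k, unitv a)) = c x * x (Some (k, unitv a)) + (\<Sum>y\<in>F - {x}. c y * y (Some (k, unitv a)))"
      unfolding F(3) using sum.remove[OF F(1) xF] by simp
    also have "\<dots> = c x"
    proof -
      have "(\<Sum>y\<in>F - {x}. c y * y (Some (k, unitv a))) = 0" using others by (intro sum.neutral) blast
      then show ?thesis using S.pj_one[OF xE] k_def a_def by simp
    qed
    finally show False using P0 bx by simp
  qed
  have "\<forall>x\<in>F. c x \<noteq> 0 \<longrightarrow> x \<in> ?G"
  proof (intro ballI impI)
    fix x assume xF: "x \<in> F" and cx: "c x \<noteq> 0"
    show "x \<in> ?G"
    proof (cases "x \<in> E")
      case True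
      then have "cls n id x \<le> i" using B1[OF xF] cx by auto
      then show ?thesis using True by simp
    next
      case False
      then obtain g l where gl: "g \<in> E" "l \<in> {1..n}" "l \<le> cls n id g" "x = ldiff D l g"
        using Fcases[OF xF] by blast
      have "cls n id g \<le> i"
      proof (rule ccontr)
        assume "\<not> cls n id g \<le> i"
        then have "x \<in> Bad2" unfolding Bad2_def using xF cx gl by auto
        then show False using B2 by simp
      qed
      then show ?thesis using gl by blast
    qed
  qed
  then show ?thesis by (rule lspan_nz[OF F(1) F(3)])
qed

theorem proposition5p5:
  fixes D :: "nat \<Rightarrow> 'a::field \<Rightarrow> 'a" and n m i :: nat and E :: "'a lform set"
  assumes "diff_field n D"
    and "linear_first_order_system n m E"
    and "no_zero_order n E"
    and "delta_regular D n m E"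
    and "solved_form n id E"
    and "involutive D n 1 id E"
    and "i \<in> {1..n}"
  shows "(\<forall>e\<in>{e\<in>E. cls n id e \<le> i}. \<forall>k j. e (Some (k, unitv j)) \<noteq> 0 \<longrightarrow> j \<le> i)
       \<and> involutive D n 1 (shift_order n i) {e\<in>E. cls n id e \<le> i}"
proof -
  note df = assms(1)
  have inv1: "lspan (prol D n E 1) = lspan (mult_prol D n id E)" using assms(6) unfolding involutive_def by simp
  obtain pj where pj1: "\<forall>e\<in>E. snd (pj e) \<in> {1..n} \<and> e (Some (fst (pj e), unitv (snd (pj e)))) = 1
            \<and> id (snd (pj e)) = cls n id e"
    and pj2: "\<forall>e\<in>E. \<forall>e'\<in>E. e' \<noteq> e \<longrightarrow> e' (Some (fst (pj e), unitv (snd (pj e)))) = 0"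
    using assms(5) unfolding solved_form_def by blast
  have wf: "\<And>e. e \<in> E \<Longrightarrow> wf_form n m e" and ord: "\<And>e. e \<in> E \<Longrightarrow> ford n e \<le> 1"
    using assms(2) unfolding linear_first_order_system_def by auto
  have sysE: "sys D n m id E pj"
    by (unfold_locales) (use df wf ord pj1 pj2 in auto)
  define Ei where "Ei = {e\<in>E. cls n id e \<le> i}"
  have part1: "\<forall>e\<in>Ei. \<forall>k j. e (Some (k, unitv j)) \<noteq> 0 \<longrightarrow> j \<le> i"
  proof (intro ballI allI impI)
    fix e k j assume e: "e \<in> Ei" and nz: "e (Some (k, unitv j)) \<noteq> 0"
    have eE: "e \<in> E" and ci: "cls n id e \<le> i" using e Ei_def by auto
    show "j \<le> i" using jets_le(2)[where e=e, OF wf[OF eE] nz] ci by simp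
  qed
  have clsEi: "cls n (shift_order n i) e = cls n id e + (n - i)" if e: "e \<in> Ei" for e
  proof (rule cls_shift)
    have eE: "e \<in> E" using e Ei_def by simp
    show "{j \<in> {1..n}. \<exists>k. e (Some (k, unitv j)) \<noteq> 0} \<subseteq> {..i}"
      using part1 e by auto
    have a: "snd (pj e) \<in> {1..n}" "e (Some (fst (pj e), unitv (snd (pj e)))) = 1" using pj1 eE by auto
    have "snd (pj e) \<in> {j \<in> {1..n}. \<exists>k. e (Some (k, unitv j)) \<noteq> 0}"
      using a by (intro CollectI conjI exI[of _ "fst (pj e)"]) simp_all
    then show "{j \<in> {1..n}. \<exists>k. e (Some (k, unitv j)) \<noteq> 0} \<noteq> {}" by blast
  qed
  have sh: "shift_order n i j = j + (n - i)" if "j \<le> i" for j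
    using that unfolding shift_order_def by simp
  have sysT: "sys D n m (shift_order n i) Ei pj"
  proof (unfold_locales)
    show "diff_field n D" by (rule df)
    show "\<And>e. e \<in> Ei \<Longrightarrow> wf_form n m e" using wf Ei_def by auto
    show "\<And>e. e \<in> Ei \<Longrightarrow> ford n e \<le> 1" using ord Ei_def by auto
    show "inj_on (shift_order n i) {1..n}" by (rule inj_shift[OF assms(7)])
    show "\<And>e. e \<in> Ei \<Longrightarrow> snd (pj e) \<in> {1..n}" using pj1 Ei_def by auto
    show "\<And>e. e \<in> Ei \<Longrightarrow> e (Some (fst (pj e), unitv (snd (pj e)))) = 1" using pj1 Ei_def by auto
    show "\<And>e e'. e \<in> Ei \<Longrightarrow> e' \<in> Ei \<Longrightarrow> e' \<noteq> e \<Longrightarrow> e' (Some (fst (pj e), unitv (snd (pj e)))) = 0"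
      using pj2 Ei_def by auto
    show "shift_order n i (snd (pj e)) = cls n (shift_order n i) e" if e: "e \<in> Ei" for e
    proof -
      have "snd (pj e) = cls n id e" "cls n id e \<le> i" using pj1 e Ei_def by auto
      then show ?thesis using sh clsEi[OF e] by simp
    qed
  qed
  interpret T: sys D n m "shift_order n i" Ei pj by (rule sysT)
  have GT: "{x. (x \<in> E \<and> cls n id x \<le> i) \<or>
     (\<exists>g l. g \<in> E \<and> cls n id g \<le> i \<and> l \<in> {1..n} \<and> l \<le> cls n id g \<and> x = ldiff D l g)} \<subseteq> T.Ms 1"
  proof
    fix x assume "x \<in> {x. (x \<in> E \<and> cls n id x \<le> i) \<or>
     (\<exists>g l. g \<in> E \<and> cls n id g \<le> i \<and> l \<in> {1..n} \<and> l \<le> cls n id g \<and> x = ldiff D l g)}"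
    then consider "x \<in> E \<and> cls n id x \<le> i"
      | g l where "g \<in> E" "cls n id g \<le> i" "l \<in> {1..n}" "l \<le> cls n id g" "x = ldiff D l g" by blast
    then show "x \<in> T.Ms 1"
    proof cases
      case 1 then have "x \<in> Ei" using Ei_def by simp
      then show ?thesis by (rule T.E_Ms)
    next
      case 2
      have gEi: "g \<in> Ei" using 2 Ei_def by simp
      have "T.mult g l" unfolding T.mult_def using 2 sh[of l] clsEi[OF gEi] by simp
      then show ?thesis using T.MsI[OF gEi, of "[l]" 1] 2(5) by simp
    qed
  qed
  have loc: "ldiff D j f \<in> lspan (T.Ms 1)" if f: "f \<in> Ei" and j: "j \<in> {1..n}" for f j
  proof (cases "T.mult f j")
    case True
    then have "dl D [j] f \<in> T.Ms 1" using T.MsI[OF f, of "[j]" 1] by simp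
    then show ?thesis by (simp add: lspan_mem)
  next
    case False
    have fE: "f \<in> E" "cls n id f \<le> i" using f Ei_def by auto
    have ji: "j \<le> i"
    proof (rule ccontr)
      assume "\<not> j \<le> i"
      then have "shift_order n i j = j - i" unfolding shift_order_def by simp
      moreover have "j - i \<le> n - i" using j by (simp add: diff_le_mono)
      ultimately have "shift_order n i j \<le> cls n (shift_order n i) f"
        using clsEi[OF f] by linarith
      then show False using False j unfolding T.mult_def by simp
    qed
    have "ldiff D j f \<in> lspan {x. (x \<in> E \<and> cls n id x \<le> i) \<or>
     (\<exists>g l. g \<in> E \<and> cls n id g \<le> i \<and> l \<in> {1..n} \<and> l \<le> cls n id g \<and> x = ldiff D l g)}"
      by (rule B_sep[OF sysE inv1 fE j ji])
    then show ?thesis by (rule subsetD[OF lspan_mono[OF GT]])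
  qed
  have inv: "involutive D n 1 (shift_order n i) Ei" by (rule T.involutive_sys[OF loc])
  from part1 inv show ?thesis unfolding Ei_def by (rule conjI)
qed

end
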